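(* Let $\mathcal I=\mathbb R^d$ with the standard inner product, let $\mathcal G$ be a compact Abelian group with normalized Haar measure $dg$ acting on $\mathcal I$ by a unitary representation, and let $\mathcal S$ be the unit sphere of $\mathcal I$ with normalized uniform measure $u$. For $I\in\mathcal I$ and $t\in\mathcal S$ let $\mu^t(I)$ be the cumulative distribution function of the law of $g\mapsto\langle I,gt\rangle$ on $(\mathcal G,dg)$, i.e. $\mu^t(I)(b)=\int H(b-\langle I,gt\rangle)\,dg$. Let $d_\infty(f,f')=\sup_{s\in\mathbb R}|f(s)-f'(s)|$ and define $$d(I,I')=\int d_\infty(\mu^t(I),\mu^t(I'))\,du(t),\qquad \widehat d(I,I')=\frac1k\sum_{i=1}^k d_\infty(\mu^{t_i}(I),\mu^{t_i}(I')),$$ where $t_1,\dots,t_k$ are templates drawn independently from $u$. Consider a set $\mathcal I_n$ of $n$ points of $\mathcal I$. There is a constant $c$ such that if $k\ge\frac{2}{c\epsilon^2}\log\frac n\delta$, then with probability $1-\delta^2$, $$|d(I,I')-\widehat d(I,I')|\le\epsilon\quad\text{for all } I,I'\in\mathcal I_n.$$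
   Context: $H$ is the Heaviside step function. *)

theory Defs
  imports "HOL-Probability.Probability"
begin

text \<open>Heaviside step function, with the convention H(0) = 1, so that the
  integral below is the (right-continuous) cumulative distribution function.\<close>
definition heaviside :: "real \<Rightarrow> real" where
  "heaviside x = (if 0 \<le> x then 1 else 0)"

text \<open>Normalized uniform (surface) measure on the unit sphere of a Euclidean space,
  defined as the cone measure: u(A) = vol {r x. x in A, 0 < r \<le> 1} / vol(ball 0 1),
  i.e. the push-forward of the uniform distribution on the unit ball (minus the
  origin) under radial projection x \<mapsto> x / |x|
  (the null point 0 is sent to a fixed basis vector, only for totality).\<close>
definition uniform_sphere :: "'a::euclidean_space measure" where
  "uniform_sphere =
     distr (uniform_measure lborel (ball 0 1 - {0}))
           (restrict_space borel (sphere 0 1))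
           (\<lambda>x. if x = 0 then (SOME b. b \<in> Basis) else x /\<^sub>R norm x)"

definition compact_group_unitary_rep ::
    "'g::{topological_ab_group_add,t2_space} measure \<Rightarrow> ('g \<Rightarrow> 'a::euclidean_space \<Rightarrow> 'a) \<Rightarrow> bool" where
  "compact_group_unitary_rep Hm rho \<longleftrightarrow>
     compact (UNIV :: 'g set) \<and>
     prob_space Hm \<and> sets Hm = sets borel \<and>
     (\<forall>g A. A \<in> sets borel \<longrightarrow> emeasure Hm ((+) g ` A) = emeasure Hm A) \<and>
     (\<forall>g. orthogonal_transformation (rho g)) \<and>
     rho 0 = id \<and> (\<forall>g h. rho (g + h) = rho g \<circ> rho h) \<and>
     (\<forall>x. continuous_on UNIV (\<lambda>g. rho g x))"

definition mu_cdf :: "'g measure \<Rightarrow> ('g \<Rightarrow> 'a::euclidean_space \<Rightarrow> 'a) \<Rightarrow> 'a \<Rightarrow> 'a \<Rightarrow> real \<Rightarrow> real" where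
  "mu_cdf Hm rho t I b = (\<integral>g. heaviside (b - I \<bullet> rho g t) \<partial>Hm)"

definition d_inf :: "(real \<Rightarrow> real) \<Rightarrow> (real \<Rightarrow> real) \<Rightarrow> real" where
  "d_inf f f' = (SUP s. \<bar>f s - f' s\<bar>)"

definition dist_d :: "'g measure \<Rightarrow> ('g \<Rightarrow> 'a::euclidean_space \<Rightarrow> 'a) \<Rightarrow> 'a \<Rightarrow> 'a \<Rightarrow> real" where
  "dist_d Hm rho I I' =
     (\<integral>t. d_inf (mu_cdf Hm rho t I) (mu_cdf Hm rho t I') \<partial>uniform_sphere)"

definition dist_hat :: "'g measure \<Rightarrow> ('g \<Rightarrow> 'a::euclidean_space \<Rightarrow> 'a) \<Rightarrow> nat \<Rightarrow> (nat \<Rightarrow> 'a) \<Rightarrow> 'a \<Rightarrow> 'a \<Rightarrow> real" where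
  "dist_hat Hm rho k ts I I' =
     (1 / real k) * (\<Sum>i<k. d_inf (mu_cdf Hm rho (ts i) I) (mu_cdf Hm rho (ts i) I'))"

end

theory Submission
  imports Defs
begin

lemma heaviside_alt: "heaviside = (\<lambda>x. if 0 \<le> x then 1 else 0)"
  by (rule ext) (simp add: heaviside_def)

lemma heaviside_meas[measurable]: "heaviside \<in> borel_measurable borel"
  unfolding heaviside_alt by measurable

lemma heaviside_bnd: "0 \<le> heaviside x" "heaviside x \<le> 1"
  by (auto simp: heaviside_def)

lemma phi_lim:
  fixes y b :: real
  shows "(\<lambda>m::nat. max 0 (min 1 (1 - real m * (y - b)))) \<longlonglongrightarrow> heaviside (b - y)"
proof (cases "y \<le> b")
  case True
  then have "\<And>m::nat. real m * (y - b) \<le> 0" by (simp add: mult_nonneg_nonpos)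
  then have "\<And>m::nat. max 0 (min 1 (1 - real m * (y - b))) = 1" by simp
  then show ?thesis using True by (simp add: heaviside_def)
next
  case False
  obtain N :: nat where N: "1 / (y - b) < real N" using reals_Archimedean2 by blast
  have "eventually (\<lambda>m. max 0 (min 1 (1 - real m * (y - b))) = heaviside (b - y)) sequentially"
  proof (rule eventually_sequentiallyI[of N])
    fix m assume "N \<le> m"
    then have "1 / (y - b) < real m" using N by linarith
    then have "1 < real m * (y - b)" using False by (simp add: field_simps)
    then show "max 0 (min 1 (1 - real m * (y - b))) = heaviside (b - y)"
      using False by (simp add: heaviside_def)
  qed
  then show ?thesis by (rule tendsto_eventually)
qed

lemma rat_seq:
  fixes s :: real
  obtains q where "\<And>j. q j \<in> \<rat>" "\<And>j. s < q j" "q \<longlonglongrightarrow> s"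
proof -
  have "\<forall>j::nat. \<exists>r\<in>\<rat>. s < r \<and> r < s + inverse (real (Suc j))"
    by (auto intro!: Rats_dense_in_real)
  then obtain q where q: "\<And>j. q j \<in> \<rat> \<and> s < q j \<and> q j < s + inverse (real (Suc j))"
    by metis
  have "q \<longlonglongrightarrow> s"
    by (rule tendsto_sandwich[OF _ _ tendsto_const LIMSEQ_inverse_real_of_nat_add])
       (use q in \<open>auto intro!: always_eventually less_imp_le\<close>)
  then show ?thesis using q that by blast
qed

lemma heav_lim:
  fixes q :: "nat \<Rightarrow> real"
  assumes "\<And>j. s < q j" "q \<longlonglongrightarrow> s"
  shows "(\<lambda>j. heaviside (q j - y)) \<longlonglongrightarrow> heaviside (s - y)"
proof (cases "y \<le> s")
  case True
  then have "\<And>j. heaviside (q j - y) = heaviside (s - y)"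
    using assms(1)[of j for j] by (simp add: heaviside_def) (smt (verit) assms(1))
  then show ?thesis by simp
next
  case False
  have "eventually (\<lambda>j. q j < y) sequentially"
    using order_tendstoD(2)[OF assms(2)] False by simp
  then have "eventually (\<lambda>j. heaviside (q j - y) = heaviside (s - y)) sequentially"
    by eventually_elim (use False in \<open>simp add: heaviside_def\<close>)
  then show ?thesis by (rule tendsto_eventually)
qed

lemma d_inf_rat:
  fixes F F' :: "real \<Rightarrow> real"
  assumes b: "\<And>s. 0 \<le> F s \<and> F s \<le> 1" "\<And>s. 0 \<le> F' s \<and> F' s \<le> 1"
  assumes ap: "\<And>s. \<exists>q. (\<forall>j. q j \<in> \<rat>) \<and> (\<lambda>j. F (q j)) \<longlonglongrightarrow> F s \<and> (\<lambda>j. F' (q j)) \<longlonglongrightarrow> F' s"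
  shows "d_inf F F' = (SUP q\<in>\<rat>. \<bar>F q - F' q\<bar>)"
proof -
  have bd: "\<bar>F s - F' s\<bar> \<le> 1" for s using b[of s] by auto
  have bddR: "bdd_above ((\<lambda>q. \<bar>F q - F' q\<bar>) ` \<rat>)" using bd by (intro bdd_aboveI[where M=1]) auto
  have bddU: "bdd_above (range (\<lambda>q. \<bar>F q - F' q\<bar>))" using bd by (intro bdd_aboveI[where M=1]) auto
  have ne: "\<rat> \<noteq> {}" using Rats_0 by blast
  show ?thesis unfolding d_inf_def
  proof (rule antisym)
    show "(SUP s. \<bar>F s - F' s\<bar>) \<le> (SUP q\<in>\<rat>. \<bar>F q - F' q\<bar>)"
    proof (rule cSUP_least)
      fix s
      obtain q where q: "\<forall>j. q j \<in> \<rat>" "(\<lambda>j. F (q j)) \<longlonglongrightarrow> F s" "(\<lambda>j. F' (q j)) \<longlonglongrightarrow> F' s"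
        using ap by blast
      have "(\<lambda>j. \<bar>F (q j) - F' (q j)\<bar>) \<longlonglongrightarrow> \<bar>F s - F' s\<bar>"
        by (intro tendsto_intros q)
      moreover have "\<forall>j. \<bar>F (q j) - F' (q j)\<bar> \<le> (SUP q\<in>\<rat>. \<bar>F q - F' q\<bar>)"
        using q(1) bddR by (auto intro: cSUP_upper)
      ultimately show "\<bar>F s - F' s\<bar> \<le> (SUP q\<in>\<rat>. \<bar>F q - F' q\<bar>)"
        by (intro LIMSEQ_le_const2) auto
    qed simp
    show "(SUP q\<in>\<rat>. \<bar>F q - F' q\<bar>) \<le> (SUP s. \<bar>F s - F' s\<bar>)"
      using ne bddU by (intro cSUP_least) (auto intro: cSUP_upper)
  qed
qed

lemma d_inf_bnd:
  fixes F F' :: "real \<Rightarrow> real"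
  assumes b: "\<And>s. 0 \<le> F s \<and> F s \<le> 1" "\<And>s. 0 \<le> F' s \<and> F' s \<le> 1"
  shows "0 \<le> d_inf F F'" "d_inf F F' \<le> 1"
proof -
  have bd: "\<bar>F s - F' s\<bar> \<le> 1" for s using b[of s] by auto
  have bddU: "bdd_above (range (\<lambda>q. \<bar>F q - F' q\<bar>))" using bd by (intro bdd_aboveI[where M=1]) auto
  show "0 \<le> d_inf F F'" unfolding d_inf_def
    by (rule order_trans[OF abs_ge_zero cSUP_upper[OF UNIV_I bddU]])
  show "d_inf F F' \<le> 1" unfolding d_inf_def using bd by (intro cSUP_least) auto
qed

lemma d_inf_self: "d_inf F F = 0"
  by (simp add: d_inf_def)


context
  fixes Hm :: "'g::{topological_ab_group_add,t2_space} measure" and rho :: "'g \<Rightarrow> 'a::euclidean_space \<Rightarrow> 'a"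
  assumes CG: "compact_group_unitary_rep Hm rho"
begin

lemma Hm_prob: "prob_space Hm" using CG by (simp add: compact_group_unitary_rep_def)
lemma Hm_sets: "sets Hm = sets borel" using CG by (simp add: compact_group_unitary_rep_def)

lemma rho_blin: "bounded_linear (rho g)"
proof -
  have "orthogonal_transformation (rho g)" using CG by (simp add: compact_group_unitary_rep_def)
  then show ?thesis using orthogonal_transformation_linear linear_conv_bounded_linear by blast
qed

lemma rho_meas[measurable]: "(\<lambda>g. rho g x) \<in> borel_measurable Hm"
proof -
  have "continuous_on UNIV (\<lambda>g. rho g x)" using CG by (simp add: compact_group_unitary_rep_def)
  then have "(\<lambda>g. rho g x) \<in> borel_measurable borel" by (rule borel_measurable_continuous_onI)
  then show ?thesis using measurable_cong_sets[OF Hm_sets refl] by blast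
qed

lemma int01:
  fixes f :: "'g \<Rightarrow> real"
  assumes "f \<in> borel_measurable Hm" "\<And>g. 0 \<le> f g \<and> f g \<le> 1"
  shows "0 \<le> (\<integral>g. f g \<partial>Hm) \<and> (\<integral>g. f g \<partial>Hm) \<le> 1"
proof -
  interpret prob_space Hm by (rule Hm_prob)
  have "integrable Hm f"
    by (rule finite_measure.integrable_const_bound[OF finite_measure_axioms, where B=1]) (use assms in \<open>auto intro!: AE_I2 simp: abs_le_iff\<close>)
  then have "(\<integral>g. f g \<partial>Hm) \<le> (\<integral>g. 1 \<partial>Hm)"
    using assms by (intro integral_mono) auto
  then show ?thesis using assms prob_space by (auto intro: integral_nonneg)
qed

lemma dct01:
  assumes "\<And>j. s j \<in> borel_measurable Hm" "f \<in> borel_measurable Hm"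
    "\<And>j g. \<bar>s j g\<bar> \<le> 1" "\<And>g. (\<lambda>j. s j g) \<longlonglongrightarrow> (f g :: real)"
  shows "(\<lambda>j. \<integral>g. s j g \<partial>Hm) \<longlonglongrightarrow> (\<integral>g. f g \<partial>Hm)"
proof -
  interpret prob_space Hm by (rule Hm_prob)
  show ?thesis
    by (rule integral_dominated_convergence[where w="\<lambda>_. 1"]) (use assms in auto)
qed

lemma mu_bnd: "0 \<le> mu_cdf Hm rho t I b \<and> mu_cdf Hm rho t I b \<le> 1"
  unfolding mu_cdf_def by (rule int01) (auto simp: heaviside_bnd)

lemma mu_meas: "(\<lambda>t. mu_cdf Hm rho t I b) \<in> borel_measurable borel"
proof -
  define \<phi> where "\<phi> m y = max 0 (min 1 (1 - real m * (y - b)))" for m :: nat and y :: real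
  define G where "G m t = (\<integral>g. \<phi> m (I \<bullet> rho g t) \<partial>Hm)" for m t
  have [measurable]: "\<phi> m \<in> borel_measurable borel" for m unfolding \<phi>_def by measurable
  have phib: "\<bar>\<phi> m y\<bar> \<le> 1" for m y unfolding \<phi>_def by auto
  have contG: "continuous_on UNIV (G m)" for m
  proof (rule continuous_on_sequentiallyI)
    fix u a assume ua: "u \<longlonglongrightarrow> (a::'a)"
    show "(\<lambda>n. G m (u n)) \<longlonglongrightarrow> G m a" unfolding G_def
    proof (rule dct01)
      fix g
      have "(\<lambda>n. rho g (u n)) \<longlonglongrightarrow> rho g a"
        using bounded_linear.tendsto[OF rho_blin ua] .
      then show "(\<lambda>n. \<phi> m (I \<bullet> rho g (u n))) \<longlonglongrightarrow> \<phi> m (I \<bullet> rho g a)"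
        unfolding \<phi>_def by (intro tendsto_intros)
    qed (auto simp: phib)
  qed
  have [measurable]: "G m \<in> borel_measurable borel" for m
    by (rule borel_measurable_continuous_onI[OF contG])
  show ?thesis
  proof (rule borel_measurable_LIMSEQ_real[where u=G])
    fix t
    show "(\<lambda>m. G m t) \<longlonglongrightarrow> mu_cdf Hm rho t I b" unfolding G_def mu_cdf_def
      by (rule dct01) (auto simp: phib \<phi>_def phi_lim)
  qed simp
qed

lemma mu_approx:
  "\<exists>q. (\<forall>j. q j \<in> \<rat>) \<and> (\<lambda>j. mu_cdf Hm rho t I (q j)) \<longlonglongrightarrow> mu_cdf Hm rho t I s
      \<and> (\<lambda>j. mu_cdf Hm rho t I' (q j)) \<longlonglongrightarrow> mu_cdf Hm rho t I' s"
proof -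
  obtain q where q: "\<And>j. q j \<in> \<rat>" "\<And>j. s < q j" "q \<longlonglongrightarrow> s" using rat_seq[of s] by blast
  have "(\<lambda>j. mu_cdf Hm rho t J (q j)) \<longlonglongrightarrow> mu_cdf Hm rho t J s" for J
    unfolding mu_cdf_def
    by (rule dct01) (auto simp: heaviside_bnd abs_le_iff heav_lim[OF q(2,3)] intro: order_trans[OF _ heaviside_bnd(2)])
  then show ?thesis using q(1) by blast
qed

definition Yf :: "'a \<Rightarrow> 'a \<Rightarrow> 'a \<Rightarrow> real" where
  "Yf I I' t = d_inf (mu_cdf Hm rho t I) (mu_cdf Hm rho t I')"

lemma Yf_bnd: "0 \<le> Yf I I' t" "Yf I I' t \<le> 1"
  unfolding Yf_def using d_inf_bnd[of "mu_cdf Hm rho t I" "mu_cdf Hm rho t I'"] mu_bnd by auto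

lemma Yf_meas: "Yf I I' \<in> borel_measurable borel"
proof -
  have eq: "Yf I I' = (\<lambda>t. SUP q\<in>\<rat>. \<bar>mu_cdf Hm rho t I q - mu_cdf Hm rho t I' q\<bar>)"
    unfolding Yf_def by (rule ext, rule d_inf_rat) (auto simp: mu_bnd mu_approx)
  have [measurable]: "(\<lambda>t. mu_cdf Hm rho t J b) \<in> borel_measurable borel" for J b by (rule mu_meas)
  show ?thesis unfolding eq
  proof (rule borel_measurable_cSUP)
    fix t
    show "bdd_above ((\<lambda>q. \<bar>mu_cdf Hm rho t I q - mu_cdf Hm rho t I' q\<bar>) ` \<rat>)"
    proof (intro bdd_aboveI[where M=1])
      fix x assume "x \<in> (\<lambda>q. \<bar>mu_cdf Hm rho t I q - mu_cdf Hm rho t I' q\<bar>) ` \<rat>"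
      then obtain q where "x = \<bar>mu_cdf Hm rho t I q - mu_cdf Hm rho t I' q\<bar>" by blast
      then show "x \<le> 1" using mu_bnd[of t I q] mu_bnd[of t I' q] by linarith
    qed
  qed (auto simp: countable_rat)
qed

end

lemma US_sets: "sets (uniform_sphere :: 'a::euclidean_space measure) = sets (restrict_space borel (sphere 0 1))"
  by (simp add: uniform_sphere_def)

lemma US_meas: "f \<in> borel_measurable borel \<Longrightarrow> (f :: 'a::euclidean_space \<Rightarrow> real) \<in> borel_measurable uniform_sphere"
  using measurable_cong_sets[OF US_sets refl] measurable_restrict_space1 by blast

lemma uvp: "unit_ball_vol (real n) \<noteq> 0"
  using unit_ball_vol_pos[of "real n"] by linarith

lemma US_prob: "prob_space (uniform_sphere :: 'a::euclidean_space measure)"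
proof -
  let ?A = "ball (0::'a) 1 - {0}"
  have e0: "emeasure lborel ?A = emeasure lborel (ball (0::'a) 1)"
    by (rule emeasure_Diff_null_set) (auto simp: null_sets_def emeasure_lborel_singleton)
  have P: "prob_space (uniform_measure lborel ?A)"
  proof (rule prob_space_uniform_measure)
    show "emeasure lborel ?A \<noteq> 0" unfolding e0 by (simp add: emeasure_ball uvp)
  qed (simp add: e0 emeasure_ball)
  define f :: "'a \<Rightarrow> 'a" where "f = (\<lambda>x. if x = 0 then (SOME b. b \<in> Basis) else x /\<^sub>R norm x)"
  have sb: "(SOME b. b \<in> (Basis::'a set)) \<in> Basis" by (rule someI_ex) (use nonempty_Basis in blast)
  have "f \<in> borel \<rightarrow>\<^sub>M borel" unfolding f_def by measurable
  moreover have "f \<in> space borel \<rightarrow> sphere 0 1" unfolding f_def using sb by auto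
  ultimately have "f \<in> borel \<rightarrow>\<^sub>M restrict_space borel (sphere 0 1)"
    by (intro measurable_restrict_space2)
  then have "f \<in> uniform_measure lborel ?A \<rightarrow>\<^sub>M restrict_space borel (sphere 0 1)"
    using measurable_cong_sets[of "uniform_measure lborel ?A" borel "restrict_space borel (sphere 0 1)" "restrict_space borel (sphere 0 1)"] by force
  then show ?thesis unfolding uniform_sphere_def f_def[symmetric]
    by (rule prob_space.prob_space_distr[OF P])
qed


lemma hoeff_pair:
  fixes S :: "'a measure" and Y :: "'a \<Rightarrow> real" and k :: nat
  assumes PS: "prob_space S" and YM[measurable]: "Y \<in> borel_measurable S"
    and Yb: "\<And>t. 0 \<le> Y t \<and> Y t \<le> 1" and k: "0 < k" and e: "0 \<le> \<epsilon>"
  shows "measure (PiM {..<k} (\<lambda>_. S))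
           {ts \<in> space (PiM {..<k} (\<lambda>_. S)). \<bar>(\<Sum>i\<in>{..<k}. Y (ts i)) / real k - (\<integral>t. Y t \<partial>S)\<bar> \<ge> \<epsilon>}
         \<le> 2 * exp (- 2 * real k * \<epsilon>\<^sup>2)"
proof -
  let ?M = "PiM {..<k} (\<lambda>_. S)"
  have comp: "\<And>i. i \<in> {..<k} \<Longrightarrow> distr ?M S (\<lambda>\<omega>. \<omega> i) = S"
    by (rule distr_PiM_component) (use PS in auto)
  interpret P: prob_space ?M by (rule prob_space_PiM) (use PS in auto)
  have meas_i[measurable]: "(\<lambda>\<omega>. \<omega> i) \<in> ?M \<rightarrow>\<^sub>M S" if "i \<in> {..<k}" for i
    using that by (rule measurable_component_singleton)
  have ind0: "P.indep_vars (\<lambda>_. S) (\<lambda>i \<omega>. \<omega> i) {..<k}"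
  proof (subst P.indep_vars_iff_distr_eq_PiM')
    show "{..<k} \<noteq> {}" using k by auto
    show "\<And>i. i \<in> {..<k} \<Longrightarrow> (\<lambda>\<omega>. \<omega> i) \<in> ?M \<rightarrow>\<^sub>M S" using meas_i by simp
    have "distr ?M ?M (\<lambda>x. \<lambda>i\<in>{..<k}. x i) = distr ?M ?M (\<lambda>x. x)"
      by (rule distr_cong) (auto simp: space_PiM PiE_def extensional_restrict)
    also have "\<dots> = ?M" by simp
    also have "\<dots> = PiM {..<k} (\<lambda>i. distr ?M S (\<lambda>\<omega>. \<omega> i))"
      by (rule PiM_cong) (auto simp: comp)
    finally show "distr ?M ?M (\<lambda>x. \<lambda>i\<in>{..<k}. x i) = PiM {..<k} (\<lambda>i. distr ?M S (\<lambda>\<omega>. \<omega> i))" .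
  qed
  have ind: "P.indep_vars (\<lambda>_. borel) (\<lambda>i \<omega>. Y (\<omega> i)) {..<k}"
    by (rule P.indep_vars_compose2[OF ind0]) simp
  have dY: "distr ?M borel (\<lambda>\<omega>. Y (\<omega> i)) = distr S borel Y" if "i \<in> {..<k}" for i
  proof -
    have "distr S borel Y = distr (distr ?M S (\<lambda>\<omega>. \<omega> i)) borel Y" using comp[OF that] by simp
    also have "\<dots> = distr ?M borel (Y \<circ> (\<lambda>\<omega>. \<omega> i))"
      by (rule distr_distr) (use that in simp_all)
    finally show ?thesis by (simp add: comp_def)
  qed
  have k0: "0 \<in> {..<k}" using k by simp
  interpret H: Hoeffding_ineq_iid ?M "{..<k}" "\<lambda>i \<omega>. Y (\<omega> i)" "\<lambda>\<omega>. Y (\<omega> 0)" 0 1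
    "P.expectation (\<lambda>\<omega>. Y (\<omega> 0))"
  proof unfold_locales
    show "P.indep_vars (\<lambda>_. borel) (\<lambda>i \<omega>. Y (\<omega> i)) {..<k}" by (rule ind)
    show "\<And>i. i \<in> {..<k} \<Longrightarrow> distr ?M borel (\<lambda>\<omega>. Y (\<omega> i)) = distr ?M borel (\<lambda>\<omega>. Y (\<omega> 0))"
      using dY k0 by simp
    show "(\<lambda>\<omega>. Y (\<omega> 0)) \<in> borel_measurable ?M" using k0 by simp
    show "AE x in ?M. Y (x 0) \<in> {0..1}" using Yb by (auto intro!: AE_I2)
  qed simp_all
  have mu: "P.expectation (\<lambda>\<omega>. Y (\<omega> 0)) = (\<integral>t. Y t \<partial>S)"
  proof -
    have "(\<integral>t. Y t \<partial>S) = (\<integral>t. Y t \<partial>distr ?M S (\<lambda>\<omega>. \<omega> 0))" using comp[OF k0] by simp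
    also have "\<dots> = P.expectation (\<lambda>\<omega>. Y (\<omega> 0))"
      by (rule integral_distr) (use k0 in simp_all)
    finally show ?thesis by simp
  qed
  have "P.prob {x \<in> space ?M. \<bar>(\<Sum>i\<in>{..<k}. Y (x i)) / real (card {..<k}) - P.expectation (\<lambda>\<omega>. Y (\<omega> 0))\<bar> \<ge> \<epsilon>}
      \<le> 2 * exp (- 2 * real (card {..<k}) * \<epsilon>\<^sup>2 / (1 - 0)\<^sup>2)"
    by (rule H.Hoeffding_ineq_abs_ge'[OF e]) (use k in auto)
  then show ?thesis by (simp add: mu)
qed


lemma exp_ln4: "0 < (x::real) \<Longrightarrow> exp (-4 * ln x) = 1 / x^4"
proof -
  assume x: "0 < x"
  have "x powr (-4) = exp (-4 * ln x)" using x by (simp add: powr_def)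
  moreover have "x powr (-4) = 1 / x^4" using x by (simp add: powr_minus_divide)
  ultimately show ?thesis by simp
qed

lemma final_arith:
  fixes n k :: nat and \<epsilon> \<delta> :: real
  assumes n: "2 \<le> n" and e: "0 < \<epsilon>" and d: "0 < \<delta>" "\<delta> < 1"
    and k: "real k \<ge> 2 / (1 * \<epsilon>\<^sup>2) * ln (real n / \<delta>)"
  shows "real (n * n) * (2 * exp (- 2 * real k * \<epsilon>\<^sup>2)) \<le> \<delta>\<^sup>2"
proof -
  have nd: "0 < real n / \<delta>" using n d by auto
  have "2 * real k * \<epsilon>\<^sup>2 \<ge> 4 * ln (real n / \<delta>)"
    using k e by (simp add: field_simps)
  then have "exp (- 2 * real k * \<epsilon>\<^sup>2) \<le> exp (-4 * ln (real n / \<delta>))" by simp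
  also have "\<dots> = 1 / (real n / \<delta>)^4" using nd by (rule exp_ln4)
  also have "\<dots> = \<delta>^4 / real n ^ 4" by (simp add: power_divide)
  finally have ex: "exp (- 2 * real k * \<epsilon>\<^sup>2) \<le> \<delta>^4 / real n ^ 4" .
  have "real (n * n) * (2 * exp (- 2 * real k * \<epsilon>\<^sup>2)) \<le> real (n*n) * (2 * (\<delta>^4 / real n ^ 4))"
    using ex by (intro mult_left_mono) auto
  also have "\<dots> = 2 * \<delta>^4 / (real n)^2" using n by (simp add: field_simps power2_eq_square power4_eq_xxxx)
  also have "\<dots> \<le> 2 * \<delta>^4 / 4"
  proof -
    have "(2::real)^2 \<le> (real n)^2" using n by (intro power_mono) auto
    then have "(real n)^2 \<ge> 4" by simp
    then show ?thesis using d n by (intro divide_left_mono) auto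
  qed
  also have "\<dots> \<le> \<delta>\<^sup>2"
  proof -
    have "\<delta>^4 \<le> \<delta>^2" using d by (intro power_decreasing) auto
    moreover have "0 \<le> \<delta>\<^sup>2" by simp
    ultimately show ?thesis by linarith
  qed
  finally show ?thesis .
qed


theorem theorem6:
  "\<exists>c::real. c > 0 \<and>
     (\<forall>(Hm :: 'g::{topological_ab_group_add,t2_space} measure) (rho :: 'g \<Rightarrow> 'a::euclidean_space \<Rightarrow> 'a)
        (In :: 'a set) (n::nat) (k::nat) (\<epsilon>::real) (\<delta>::real).
        compact_group_unitary_rep Hm rho \<longrightarrow> finite In \<longrightarrow> card In = n \<longrightarrow>
        0 < \<epsilon> \<longrightarrow> 0 < \<delta> \<longrightarrow> \<delta> < 1 \<longrightarrow>
        real k \<ge> 2 / (c * \<epsilon>\<^sup>2) * ln (real n / \<delta>) \<longrightarrow>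
        measure (PiM {..<k} (\<lambda>_. uniform_sphere))
          {ts \<in> space (PiM {..<k} (\<lambda>_. uniform_sphere)).
             \<forall>I\<in>In. \<forall>I'\<in>In. \<bar>dist_d Hm rho I I' - dist_hat Hm rho k ts I I'\<bar> \<le> \<epsilon>}
          \<ge> 1 - \<delta>\<^sup>2)"
proof (intro exI[of _ 1] conjI allI impI)
  show "(0::real) < 1" by simp
  fix Hm :: "'g::{topological_ab_group_add,t2_space} measure" and rho :: "'g \<Rightarrow> 'a::euclidean_space \<Rightarrow> 'a"
    and In :: "'a set" and n k :: nat and \<epsilon> \<delta> :: real
  assume CG: "compact_group_unitary_rep Hm rho" and fin: "finite In" and cn: "card In = n"
    and e: "0 < \<epsilon>" and d0: "0 < \<delta>" and d1: "\<delta> < 1"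
    and k: "real k \<ge> 2 / (1 * \<epsilon>\<^sup>2) * ln (real n / \<delta>)"
  let ?S = "uniform_sphere :: 'a measure"
  let ?M = "PiM {..<k} (\<lambda>_. ?S)"
  let ?G = "{ts \<in> space ?M. \<forall>I\<in>In. \<forall>I'\<in>In. \<bar>dist_d Hm rho I I' - dist_hat Hm rho k ts I I'\<bar> \<le> \<epsilon>}"
  interpret P: prob_space ?M by (rule prob_space_PiM) (use US_prob in auto)
  have dd: "dist_d Hm rho I I' = (\<integral>t. Yf Hm rho I I' t \<partial>?S)" for I I'
    by (simp add: dist_d_def Yf_def[OF CG, abs_def])
  have dh: "dist_hat Hm rho k ts I I' = (\<Sum>i\<in>{..<k}. Yf Hm rho I I' (ts i)) / real k" for ts I I'
    by (simp add: dist_hat_def Yf_def[OF CG])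
  have YS[measurable]: "Yf Hm rho I I' \<in> borel_measurable ?S" for I I'
    by (rule US_meas[OF Yf_meas[OF CG]])
  have X[measurable]: "(\<lambda>ts. Yf Hm rho I I' (ts i)) \<in> borel_measurable ?M" if "i < k" for I I' i
  proof -
    have "(\<lambda>ts. ts i) \<in> ?M \<rightarrow>\<^sub>M ?S" using that by (intro measurable_component_singleton) auto
    then show ?thesis using YS by (rule measurable_compose)
  qed
  show "measure ?M ?G \<ge> 1 - \<delta>\<^sup>2"
  proof (cases "n \<le> 1")
    case True
    then have eq: "\<forall>I\<in>In. \<forall>I'\<in>In. I = I'" using card_le_Suc0_iff_eq[OF fin] cn by simp
    have "?G = space ?M"
    proof -
      have "dist_d Hm rho I I = 0" "dist_hat Hm rho k ts I I = 0" for I ts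
        by (simp_all add: dist_d_def dist_hat_def d_inf_self)
      then show ?thesis using eq e by auto
    qed
    then show ?thesis using P.prob_space by simp
  next
    case False
    then have n2: "2 \<le> n" by simp
    have lnpos: "0 < ln (real n / \<delta>)" using n2 d0 d1 by (simp add: field_simps)
    have "0 < 2 / (1 * \<epsilon>\<^sup>2) * ln (real n / \<delta>)" using e lnpos by simp
    then have kpos: "0 < k" using k by linarith
    define B where "B p = {ts \<in> space ?M. \<epsilon> \<le> \<bar>(\<Sum>i\<in>{..<k}. Yf Hm rho (fst p) (snd p) (ts i)) / real k
        - (\<integral>t. Yf Hm rho (fst p) (snd p) t \<partial>?S)\<bar>}" for p
    have Bs: "B p \<in> sets ?M" for p unfolding B_def by measurable
    have Bm: "measure ?M (B p) \<le> 2 * exp (- 2 * real k * \<epsilon>\<^sup>2)" for p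
      unfolding B_def
      by (rule hoeff_pair[OF US_prob YS _ kpos]) (use Yf_bnd[OF CG] e in auto)
    have sub: "space ?M - (\<Union>p\<in>In \<times> In. B p) \<subseteq> ?G"
    proof
      fix ts assume ts: "ts \<in> space ?M - (\<Union>p\<in>In \<times> In. B p)"
      show "ts \<in> ?G"
      proof (simp add: ts[THEN DiffD1], intro ballI)
        fix I I' assume "I \<in> In" "I' \<in> In"
        then have "ts \<notin> B (I, I')" using ts by blast
        then show "\<bar>dist_d Hm rho I I' - dist_hat Hm rho k ts I I'\<bar> \<le> \<epsilon>"
          using ts unfolding B_def dd dh by (auto simp: abs_minus_commute)
      qed
    qed
    have Gs: "?G \<in> sets ?M"
    proof -
      have "?G = space ?M - (\<Union>p\<in>In \<times> In. {ts \<in> space ?M. \<epsilon> < \<bar>(\<integral>t. Yf Hm rho (fst p) (snd p) t \<partial>?S)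
          - (\<Sum>i\<in>{..<k}. Yf Hm rho (fst p) (snd p) (ts i)) / real k\<bar>})"
        unfolding dd dh by auto (meson linorder_not_le)
      also have "\<dots> \<in> sets ?M"
        by (intro sets.Diff sets.top sets.finite_UN) (use fin in \<open>auto intro!: finite_cartesian_product\<close>)
      finally show ?thesis .
    qed
    have Us: "(\<Union>p\<in>In \<times> In. B p) \<in> sets ?M" using fin Bs by auto
    have "measure ?M (\<Union>p\<in>In \<times> In. B p) \<le> (\<Sum>p\<in>In \<times> In. measure ?M (B p))"
      by (rule P.finite_measure_subadditive_finite) (use fin Bs in auto)
    also have "\<dots> \<le> (\<Sum>p\<in>In \<times> In. 2 * exp (- 2 * real k * \<epsilon>\<^sup>2))"
      by (rule sum_mono) (rule Bm)
    also have "\<dots> = real (n * n) * (2 * exp (- 2 * real k * \<epsilon>\<^sup>2))"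
      using cn fin by (simp add: card_cartesian_product)
    also have "\<dots> \<le> \<delta>\<^sup>2" by (rule final_arith[OF n2 e d0 d1 k])
    finally have U: "measure ?M (\<Union>p\<in>In \<times> In. B p) \<le> \<delta>\<^sup>2" .
    have "1 - \<delta>\<^sup>2 \<le> measure ?M (space ?M - (\<Union>p\<in>In \<times> In. B p))"
      using P.prob_compl[OF Us] U by simp
    also have "\<dots> \<le> measure ?M ?G"
      by (rule P.finite_measure_mono[OF sub Gs])
    finally show ?thesis .
  qed
qed

end
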